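(* Let $I=[a,b]$ be a compact interval, $r\ge1$ an integer, $g\in C^r(I,\mathbb R)$ with $\|g'\|_{L^\infty(I)}\le1$, put $C_r:=\|g^{(r)}\|_{L^\infty(I)}$, and let $C>0$. Then for every $\lambda$ with $0<\lambda\le\|g\|_\infty$ and $C\lambda\le|I|$ there is a finite family of pairwise disjoint open (relative to $I$) intervals $I_{\lambda,i}$, $i\in\mathcal I_\lambda$, each of length $|I_{\lambda,i}|\ge C\lambda$, such that: (i) $|\mathcal I_\lambda|\le 30r\big(1+|I|\,C_r^{1/r}\lambda^{-1/r}\big)$; (ii) with $V_\lambda:=\bigcup_{i\in\mathcal I_\lambda}I_{\lambda,i}$, we have $\{t\in I:|g(t)|<\lambda\}\subset V_\lambda\subset\{t\in I:|g(t)|<(8+C)\lambda\}$.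
   Context: $\|g\|_\infty$ denotes the supremum of $|g|$ over $I$, and $|I|=b-a$. *)

theory Defs
  imports "HOL-Analysis.Analysis"
begin

text \<open>g is C^r on S with derivatives D 0 = g, D 1 = g', ..., D r = g^(r):
  each D k (k < r) has derivative D (Suc k) relative to S, and D r is continuous on S.\<close>
definition Cr_with_derivs :: "nat \<Rightarrow> (real \<Rightarrow> real) \<Rightarrow> real set \<Rightarrow> (nat \<Rightarrow> real \<Rightarrow> real) \<Rightarrow> bool" where
  "Cr_with_derivs r g S D \<longleftrightarrow>
     (\<forall>x\<in>S. D 0 x = g x) \<and>
     (\<forall>k<r. \<forall>x\<in>S. (D k has_real_derivative D (Suc k) x) (at x within S)) \<and>
     continuous_on S (D r)"

definition sup_norm_on :: "real set \<Rightarrow> (real \<Rightarrow> real) \<Rightarrow> real" where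
  "sup_norm_on S f = (SUP t\<in>S. \<bar>f t\<bar>)"

definition ivl_length :: "real set \<Rightarrow> real" where
  "ivl_length J = Sup J - Inf J"

end

theory Submission
  imports Defs "HOL-Computational_Algebra.Polynomial"
begin


lemma Cr_cont:
  assumes "Cr_with_derivs r g S D" "k \<le> r"
  shows "continuous_on S (D k)"
proof (cases "k = r")
  case True thus ?thesis using assms unfolding Cr_with_derivs_def by auto
next
  case False
  hence "k < r" using assms by auto
  hence "\<And>x. x \<in> S \<Longrightarrow> (D k has_field_derivative D (Suc k) x) (at x within S)"
    using assms unfolding Cr_with_derivs_def by auto
  thus ?thesis by (rule DERIV_continuous_on)
qed

lemma sup_norm_ge:
  assumes "compact S" "continuous_on S f" "x \<in> S"
  shows "\<bar>f x\<bar> \<le> sup_norm_on S f"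
proof -
  have "compact ((\<lambda>t. \<bar>f t\<bar>) ` S)"
    by (rule compact_continuous_image) (auto intro: continuous_intros assms)
  hence "bdd_above ((\<lambda>t. \<bar>f t\<bar>) ` S)" by (meson bounded_imp_bdd_above compact_imp_bounded)
  thus ?thesis unfolding sup_norm_on_def using assms(3) by (rule cSUP_upper2) simp
qed

lemma lip:
  assumes "Cr_with_derivs r g {a..b} D" "r \<ge> 1" "sup_norm_on {a..b} (D 1) \<le> 1"
    "x \<in> {a..b}" "y \<in> {a..b}"
  shows "\<bar>g x - g y\<bar> \<le> \<bar>x - y\<bar>"
proof -
  have c1: "continuous_on {a..b} (D 1)" using Cr_cont[OF assms(1)] assms(2) by auto
  have "norm (D 0 x - D 0 y) \<le> 1 * norm (x - y)"
  proof (rule field_differentiable_bound[where f' = "D 1"])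
    show "\<And>z. z \<in> {a..b} \<Longrightarrow> (D 0 has_field_derivative D 1 z) (at z within {a..b})"
      using assms(1,2) unfolding Cr_with_derivs_def by auto
    show "\<And>z. z \<in> {a..b} \<Longrightarrow> norm (D 1 z) \<le> 1"
      using sup_norm_ge[OF _ c1] assms(3) by fastforce
  qed (use assms in auto)
  moreover have "D 0 x = g x" "D 0 y = g y" using assms(1,4,5) unfolding Cr_with_derivs_def by auto
  ultimately show ?thesis by simp
qed

lemma taylor_bound:
  assumes "Cr_with_derivs r g {a..b} D" "r \<ge> 1"
    "a \<le> c" "c \<le> x" "x \<le> b" "x - c \<le> h"
  shows "\<bar>g x - (\<Sum>i<r. (x-c)^i / fact i * D i c)\<bar> \<le> sup_norm_on {a..b} (D r) * h^r"
proof -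
  have D: "\<And>m t. m < r \<Longrightarrow> c \<le> t \<Longrightarrow> t \<le> x \<Longrightarrow>
    (D m has_vector_derivative D (Suc m) t) (at t within {c..x})"
  proof -
    fix m t assume "m < r" "c \<le> t" "t \<le> x"
    hence "(D m has_field_derivative D (Suc m) t) (at t within {a..b})"
      using assms unfolding Cr_with_derivs_def by auto
    hence "(D m has_field_derivative D (Suc m) t) (at t within {c..x})"
      by (rule DERIV_subset) (use assms in auto)
    thus "(D m has_vector_derivative D (Suc m) t) (at t within {c..x})"
      by (simp add: has_real_derivative_iff_has_vector_derivative)
  qed
  define f where "f = (\<lambda>t. if t \<in> {a..b} then D 0 t else g t)"
  have "((\<lambda>t. ((x - t) ^ (r - 1) / fact (r - 1)) *\<^sub>R D r t) has_integral
      D 0 x - (\<Sum>i<r. ((x-c)^i / fact i) *\<^sub>R D i c)) {c..x}"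
    using Taylor_has_integral[of r D "D 0" c x, OF _ refl D] assms by auto
  hence I: "((\<lambda>t. (x - t) ^ (r - 1) / fact (r - 1) * D r t) has_integral
      g x - (\<Sum>i<r. (x-c)^i / fact i * D i c)) (cbox c x)"
    using assms unfolding Cr_with_derivs_def by auto
  have cr: "continuous_on {a..b} (D r)" using Cr_cont[OF assms(1)] by auto
  have h0: "0 \<le> h" using assms by auto
  have B: "norm ((x - t) ^ (r - 1) / fact (r - 1) * D r t) \<le> h^(r-1) * sup_norm_on {a..b} (D r)"
    if "t \<in> cbox c x" for t
  proof -
    have t: "c \<le> t" "t \<le> x" using that by auto
    have "\<bar>D r t\<bar> \<le> sup_norm_on {a..b} (D r)" using sup_norm_ge[OF _ cr] t assms by auto
    moreover have "(x - t) ^ (r - 1) / fact (r - 1) \<le> h^(r-1)"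
    proof -
      have "(x - t) ^ (r - 1) \<le> h^(r-1)" using t assms by (intro power_mono) auto
      moreover have "(x - t) ^ (r - 1) / fact (r - 1) \<le> (x - t) ^ (r - 1)"
        using t using divide_left_mono[of 1 "fact (r-1)" "(x - t) ^ (r - 1)"] t fact_ge_1[of "r-1", where 'a=real] by simp
      ultimately show ?thesis by linarith
    qed
    moreover have "0 \<le> (x - t) ^ (r - 1) / fact (r - 1)" using t by auto
    ultimately have "(x - t) ^ (r - 1) / fact (r - 1) * \<bar>D r t\<bar> \<le> h^(r-1) * sup_norm_on {a..b} (D r)"
      by (intro mult_mono) (use h0 in auto)
    moreover have "norm ((x - t) ^ (r - 1) / fact (r - 1) * D r t) = (x - t) ^ (r - 1) / fact (r - 1) * \<bar>D r t\<bar>"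
      using t by (simp add: abs_mult)
    ultimately show ?thesis by simp
  qed
  have "0 \<le> sup_norm_on {a..b} (D r)" using sup_norm_ge[OF _ cr, of a] assms by fastforce
  hence "norm (g x - (\<Sum>i<r. (x-c)^i / fact i * D i c)) \<le> h^(r-1) * sup_norm_on {a..b} (D r) * Henstock_Kurzweil_Integration.content (cbox c x)"
    by (intro has_integral_bound[OF _ I B]) (use h0 in auto)
  also have "\<dots> \<le> h^(r-1) * sup_norm_on {a..b} (D r) * h"
    using assms \<open>0 \<le> sup_norm_on {a..b} (D r)\<close> h0 by (intro mult_left_mono) auto
  also have "\<dots> = sup_norm_on {a..b} (D r) * h^r"
    using assms(2) by (cases r) auto
  finally show ?thesis by simp
qed



lemma count_block:
  fixes g :: "real \<Rightarrow> real" and Q :: "real poly" and W :: "real set"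
  assumes cont: "continuous_on {c..d} g"
   and Qn: "\<And>x. x\<in>{c..d} \<Longrightarrow> \<bar>g x\<bar> < lam \<Longrightarrow> poly Q x < 0"
   and Qp: "\<And>x. x\<in>{c..d} \<Longrightarrow> \<bar>g x\<bar> \<ge> \<theta> \<Longrightarrow> poly Q x > 0"
   and degQ: "degree Q \<le> m"
   and W: "\<And>t. t \<in> {c..d} \<Longrightarrow> \<bar>g t\<bar> < \<theta> \<Longrightarrow> t \<in> W"
   and lt: "lam \<le> \<theta>"
   and B: "B \<subseteq> components W" "finite B"
   and sel: "\<And>K. K\<in>B \<Longrightarrow> sel K \<in> K \<and> sel K \<in> {c..d} \<and> \<bar>g (sel K)\<bar> < lam"
  shows "card B \<le> m + 1"
proof (cases "B = {}")
  case True thus ?thesis by simp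
next
  case False
  define M where "M = Max (sel ` B)"
  have "M \<in> sel ` B" unfolding M_def using False B by auto
  then obtain K0 where K0: "K0 \<in> B" "sel K0 = M" by auto
  have rt: "\<exists>\<rho>. \<rho> \<in> K \<and> poly Q \<rho> = 0" if K: "K \<in> B - {K0}" for K
  proof -
    define s where "s = sel K"
    have s: "s \<in> K" "s \<in> {c..d}" "\<bar>g s\<bar> < lam" using sel K s_def by auto
    have sM: "s \<le> M" unfolding M_def s_def using B K by auto
    have M: "M \<in> K0" "M \<in> {c..d}" using sel[OF K0(1)] K0 by auto
    have KC: "K \<in> components W" "K0 \<in> components W" using B K K0 by auto
    have KK0: "K \<inter> K0 = {}" using components_nonoverlap[OF KC] K by auto
    define Z where "Z = {u\<in>{s..M}. \<bar>g u\<bar> \<ge> \<theta>}"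
    have Zne: "Z \<noteq> {}"
    proof
      assume "Z = {}"
      hence "{s..M} \<subseteq> W" using W s M unfolding Z_def by fastforce
      moreover have "K \<inter> {s..M} \<noteq> {}" using s sM by auto
      ultimately have "{s..M} \<subseteq> K" using components_maximal[OF KC(1), of "{s..M}"] by auto
      thus False using sM M KK0 by auto
    qed
    have cZ: "closed Z"
    proof -
      have "continuous_on {s..M} g" by (rule continuous_on_subset[OF cont]) (use s M in auto)
      hence "closed ({s..M} \<inter> (\<lambda>u. \<bar>g u\<bar>) -` {\<theta>..})"
        by (intro continuous_closed_preimage) (auto intro: continuous_intros)
      moreover have "Z = {s..M} \<inter> (\<lambda>u. \<bar>g u\<bar>) -` {\<theta>..}" unfolding Z_def by auto
      ultimately show ?thesis by simp
    qed
    define u where "u = Inf Z"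
    have uZ: "u \<in> Z" unfolding u_def
      by (rule closed_contains_Inf[OF Zne _ cZ]) (auto simp: Z_def bdd_below_def)
    have su: "s < u" using uZ s lt unfolding Z_def by (cases "s = u") auto
    have uM: "u \<in> {c..d}" using uZ s M unfolding Z_def by auto
    have sub: "{s..<u} \<subseteq> K"
    proof (rule components_maximal[OF KC(1)])
      show "{s..<u} \<subseteq> W"
      proof
        fix x assume x: "x \<in> {s..<u}"
        have "x \<notin> Z"
        proof
          assume "x \<in> Z" hence "u \<le> x" unfolding u_def by (intro cInf_lower) (auto simp: Z_def)
          thus False using x by auto
        qed
        moreover have "x \<le> M" using x uZ unfolding Z_def by auto
        ultimately show "x \<in> W" using x W s M unfolding Z_def by auto
      qed
    qed (use s su in auto)
    have cQ: "continuous_on {s..u} (poly Q)" by (auto intro: continuous_intros)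
    have "poly Q s \<le> 0" "0 \<le> poly Q u" using Qn[OF s(2,3)] Qp[OF uM] uZ unfolding Z_def by auto
    then obtain \<rho> where \<rho>: "s \<le> \<rho>" "\<rho> \<le> u" "poly Q \<rho> = 0"
      using IVT'[of "poly Q" s 0 u] cQ su by auto
    have "\<rho> \<noteq> s" using \<rho> Qn[OF s(2,3)] by auto
    moreover have "\<rho> \<noteq> u" using \<rho> Qp[OF uM] uZ unfolding Z_def by auto
    ultimately have "\<rho> \<in> K" using sub \<rho> by auto
    thus ?thesis using \<rho> by auto
  qed
  define rho where "rho K = (SOME \<rho>. \<rho> \<in> K \<and> poly Q \<rho> = 0)" for K
  have rho: "rho K \<in> K \<and> poly Q (rho K) = 0" if "K \<in> B - {K0}" for K
    unfolding rho_def using someI_ex[OF rt[OF that]] .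
  have "poly Q (sel K0) < 0" using Qn sel[OF K0(1)] by blast
  hence Q0: "Q \<noteq> 0" by auto
  have inj: "inj_on rho (B - {K0})"
  proof (rule inj_onI)
    fix K K' assume KK: "K \<in> B - {K0}" "K' \<in> B - {K0}" "rho K = rho K'"
    have "rho K \<in> K" "rho K' \<in> K'" using rho[OF KK(1)] rho[OF KK(2)] by auto
    hence "K \<inter> K' \<noteq> {}" using KK(3) by auto
    moreover have "K \<in> components W" "K' \<in> components W" using B KK by auto
    ultimately show "K = K'" using components_nonoverlap by blast
  qed
  have "card (B - {K0}) \<le> card {x. poly Q x = 0}"
  proof (rule card_inj_on_le[OF inj])
    show "rho ` (B - {K0}) \<subseteq> {x. poly Q x = 0}" using rho by blast
    show "finite {x. poly Q x = 0}" using poly_roots_finite[OF Q0] .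
  qed
  also have "\<dots> \<le> m" using card_poly_roots_bound[OF Q0] degQ by linarith
  finally have "card (B - {K0}) \<le> m" .
  moreover have "card B = card (B - {K0}) + 1" using K0 B card_gt_0_iff[of B] by (auto simp: card_Diff_singleton)
  ultimately show ?thesis by simp
qed



lemma idx_prop:
  fixes a b t h :: real and N :: nat
  assumes "a \<le> t" "t \<le> b" "N \<ge> 1" "h = (b-a)/N" "a < b"
  defines "k \<equiv> min (N-1) (nat \<lfloor>(t-a)/h\<rfloor>)"
  shows "k < N" "a + real k * h \<le> t" "t \<le> a + (real k + 1) * h"
proof -
  have h: "h > 0" using assms by auto
  define y where "y = (t-a)/h"
  have y0: "0 \<le> y" using assms h unfolding y_def by auto
  have yN: "y \<le> N" using assms h unfolding y_def by (auto simp: divide_le_eq field_simps)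
  have ty: "t = a + y * h" using h unfolding y_def by auto
  define k0 where "k0 = nat \<lfloor>y\<rfloor>"
  have k0: "real k0 \<le> y" "y < real k0 + 1" using y0 unfolding k0_def by linarith+
  show "k < N" unfolding k_def using assms by auto
  have "real k \<le> y \<and> y \<le> real k + 1"
  proof (cases "k0 \<le> N - 1")
    case True hence "k = k0" unfolding k_def k0_def y_def by auto
    thus ?thesis using k0 by auto
  next
    case False hence "k = N - 1" unfolding k_def k0_def y_def by auto
    moreover have "y = N" using False k0 yN assms(3) by (cases N) auto
    ultimately show ?thesis using assms(3) by (auto simp: of_nat_diff)
  qed
  thus "a + real k * h \<le> t" "t \<le> a + (real k + 1) * h"
    using ty h by (auto intro: mult_right_mono)
qed

lemma N_props:
  fixes L X lam Cr :: real and r :: nat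
  assumes "L > 0" "X \<ge> 0" "r \<ge> 1" "lam > 0" "Cr \<ge> 0"
    and X: "X = (Cr/lam) powr (1/real r)"
  defines "N \<equiv> max 1 (nat \<lceil>L * X\<rceil>)"
  shows "N \<ge> 1" "real N \<le> 1 + L * X" "Cr * (L / real N) ^ r \<le> lam"
proof -
  show "N \<ge> 1" unfolding N_def by auto
  show "real N \<le> 1 + L * X"
    unfolding N_def using assms by (cases "nat \<lceil>L * X\<rceil> \<le> 1") (auto, linarith)
  show "Cr * (L / real N) ^ r \<le> lam"
  proof (cases "Cr = 0")
    case True thus ?thesis using assms by simp
  next
    case False
    hence Cp: "Cr > 0" using assms by auto
    hence Xp: "X > 0" using X assms by auto
    have XN: "L * X \<le> real N" unfolding N_def by linarith
    have Np: "real N > 0" unfolding N_def by auto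
    have "L / real N \<le> 1 / X" using XN Xp Np assms by (auto simp: field_simps)
    hence "(L / real N) ^ r \<le> (1 / X) ^ r" using assms Np by (intro power_mono) auto
    also have "(1/X)^r = 1 / X^r" by (simp add: power_divide)
    also have "X^r = Cr / lam"
      using X powr_power[of "Cr/lam" "1/real r" r] Cp assms by auto
    finally have "(L / real N) ^ r \<le> lam / Cr" by simp
    thus ?thesis using Cp by (simp add: field_simps)
  qed
qed



theorem mainTheorem5:
  fixes a b C lam :: real and r :: nat and g :: "real \<Rightarrow> real" and D :: "nat \<Rightarrow> real \<Rightarrow> real"
  assumes "a < b"
    and "r \<ge> 1"
    and "Cr_with_derivs r g {a..b} D"
    and "sup_norm_on {a..b} (D 1) \<le> 1"
    and "C > 0"
    and "0 < lam" and "lam \<le> sup_norm_on {a..b} g"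
    and "C * lam \<le> b - a"
  shows "\<exists>F :: real set set. finite F \<and> pairwise disjnt F \<and>
     (\<forall>J\<in>F. J \<noteq> {} \<and> is_interval J \<and> openin (top_of_set {a..b}) J \<and> ivl_length J \<ge> C * lam) \<and>
     real (card F) \<le> 30 * real r * (1 + (b - a) * (sup_norm_on {a..b} (D r)) powr (1 / real r) * lam powr (- 1 / real r)) \<and>
     {t \<in> {a..b}. \<bar>g t\<bar> < lam} \<subseteq> \<Union>F \<and>
     \<Union>F \<subseteq> {t \<in> {a..b}. \<bar>g t\<bar> < (8 + C) * lam}"
proof -
  note ab = assms(1) and r1 = assms(2) and Dr = assms(3) and D1 = assms(4)
    and C0 = assms(5) and lam0 = assms(6) and CL = assms(8)
  define I where "I = {a..b}"
  define Cr where "Cr = sup_norm_on {a..b} (D r)"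
  define \<theta> where "\<theta> = (8 + C) * lam"
  define S0 where "S0 = {t\<in>I. \<bar>g t\<bar> < lam}"
  define W where "W = {t\<in>I. \<bar>g t\<bar> < \<theta>}"
  define F where "F = {K\<in>components W. K \<inter> S0 \<noteq> {}}"
  have cg: "continuous_on I g"
  proof -
    have "continuous_on I (D 0)" using Cr_cont[OF Dr] unfolding I_def by auto
    moreover have "\<And>x. x \<in> I \<Longrightarrow> D 0 x = g x" using Dr unfolding Cr_with_derivs_def I_def by auto
    ultimately show ?thesis using continuous_on_cong by blast
  qed
  have crc: "continuous_on I (D r)" using Cr_cont[OF Dr] unfolding I_def by auto
  have Cr0: "Cr \<ge> 0" using sup_norm_ge[OF _ crc, of a] ab unfolding Cr_def I_def by fastforce
  have th: "lam < \<theta>" using mult_pos_pos[OF C0 lam0] lam0 unfolding \<theta>_def distrib_right by linarith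
  have Wsub: "W \<subseteq> I" unfolding W_def by auto
  have Wopen: "openin (top_of_set I) W"
  proof -
    have "openin (top_of_set I) (I \<inter> (\<lambda>t. \<bar>g t\<bar>) -` {..<\<theta>})"
      by (rule continuous_openin_preimage_gen) (auto intro: continuous_intros cg)
    moreover have "I \<inter> (\<lambda>t. \<bar>g t\<bar>) -` {..<\<theta>} = W" unfolding W_def by auto
    ultimately show ?thesis by simp
  qed
  have Wlc: "locally connected W"
    by (rule locally_open_subset[OF convex_imp_locally_connected Wopen]) (simp add: I_def)
  have memb: "J \<noteq> {} \<and> is_interval J \<and> openin (top_of_set {a..b}) J \<and> ivl_length J \<ge> C * lam"
    if J: "J \<in> F" for J
  proof -
    have JC: "J \<in> components W" using J unfolding F_def by auto
    obtain s where s: "s \<in> J" "s \<in> S0" using J unfolding F_def by auto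
    have sI: "s \<in> I" "\<bar>g s\<bar> < lam" using s unfolding S0_def by auto
    have "is_interval J" using in_components_connected[OF JC] is_interval_connected_1 by blast
    moreover have "openin (top_of_set {a..b}) J"
      using openin_trans[OF openin_components_locally_connected[OF Wlc JC] Wopen] unfolding I_def .
    moreover have "ivl_length J \<ge> C * lam"
    proof -
      define p where "p = max a (s - C*lam)"
      define q where "q = min b (s + C*lam)"
      have "{p..q} \<subseteq> J"
      proof (rule components_maximal[OF JC])
        show "{p..q} \<subseteq> W"
        proof
          fix t assume t: "t \<in> {p..q}"
          hence tI: "t \<in> I" unfolding p_def q_def I_def by auto
          have "\<bar>g t - g s\<bar> \<le> \<bar>t - s\<bar>" using lip[OF Dr r1 D1] tI sI unfolding I_def by auto
          moreover have "\<bar>t - s\<bar> \<le> C * lam" using t unfolding p_def q_def by auto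
          ultimately have "\<bar>g t\<bar> < \<theta>" using sI unfolding \<theta>_def by (auto simp: algebra_simps)
          thus "t \<in> W" using tI unfolding W_def by auto
        qed
        show "J \<inter> {p..q} \<noteq> {}" using s sI mult_pos_pos[OF C0 lam0] unfolding p_def q_def I_def by auto
      qed auto
      moreover have JI: "J \<subseteq> I" using in_components_subset[OF JC] Wsub by auto
      moreover have pq: "p \<le> q" using sI mult_pos_pos[OF C0 lam0] unfolding p_def q_def I_def by auto
      ultimately have "q \<le> Sup J" "Inf J \<le> p"
        by (auto intro!: cSup_upper cInf_lower simp: I_def bdd_above_def bdd_below_def)
           (meson atLeastAtMost_iff subset_eq)+
      moreover have "q - p \<ge> C * lam" using CL sI mult_pos_pos[OF C0 lam0] unfolding p_def q_def I_def by (auto simp: min_def max_def)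
      ultimately show ?thesis unfolding ivl_length_def by linarith
    qed
    ultimately show ?thesis using s by auto
  qed
  have pw: "pairwise disjnt F"
    unfolding pairwise_def disjnt_def F_def using components_nonoverlap by blast
  have cov: "S0 \<subseteq> \<Union>F"
  proof
    fix s assume s: "s \<in> S0"
    hence "s \<in> W" using th unfolding S0_def W_def by auto
    then obtain K where "K \<in> components W" "s \<in> K" using Union_components[of W] by blast
    thus "s \<in> \<Union>F" using s unfolding F_def by auto
  qed
  have inW: "\<Union>F \<subseteq> W" unfolding F_def using in_components_subset by blast
  define X where "X = (Cr/lam) powr (1/real r)"
  have X0: "X \<ge> 0" unfolding X_def by auto
  define N where "N = max 1 (nat \<lceil>(b-a) * X\<rceil>)"
  have N1: "N \<ge> 1" and NX: "real N \<le> 1 + (b-a) * X" and hb: "Cr * ((b-a) / real N) ^ r \<le> lam"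
    using N_props[of "b-a" X r lam Cr] ab X0 r1 lam0 Cr0 unfolding X_def N_def by auto
  define h where "h = (b-a) / real N"
  have h0: "h > 0" using ab N1 unfolding h_def by auto
  define idx where "idx t = min (N-1) (nat \<lfloor>(t-a)/h\<rfloor>)" for t
  have idx: "idx t < N" "a + real (idx t) * h \<le> t" "t \<le> a + (real (idx t) + 1) * h"
    if "t \<in> I" for t
    using idx_prop[of a t b N h] that ab N1 unfolding h_def idx_def I_def by auto
  define sel where "sel K = (SOME s. s \<in> K \<and> s \<in> S0)" for K
  have sel: "sel K \<in> K \<and> sel K \<in> S0" if "K \<in> F" for K
    unfolding sel_def by (rule someI_ex) (use that F_def in auto)
  define Fk where "Fk k = {K\<in>F. idx (sel K) = k}" for k
  have Fk: "finite (Fk k) \<and> card (Fk k) \<le> 2 * r - 1" if k: "k < N" for k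
  proof (rule finite_if_finite_subsets_card_bdd)
    fix G assume G: "G \<subseteq> Fk k" "finite G"
    define c where "c = a + real k * h"
    define d where "d = c + h"
    have cI: "a \<le> c" using h0 unfolding c_def by auto
    have dI: "d \<le> b"
    proof -
      have "real k + 1 \<le> real N" using k by linarith
      hence "(real k + 1) * h \<le> real N * h" using h0 by (intro mult_right_mono) auto
      also have "real N * h = b - a" unfolding h_def using N1 by auto
      finally show ?thesis unfolding d_def c_def by (simp add: algebra_simps)
    qed
    define P :: "real poly" where "P = (\<Sum>i<r. smult (D i c / fact i) ([:-c,1:]^i))"
    have Pv: "poly P x = (\<Sum>i<r. (x-c)^i / fact i * D i c)" for x
      unfolding P_def by (simp add: poly_sum mult.commute)
    have degP: "degree P \<le> r - 1"
      unfolding P_def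
    proof (rule degree_sum_le)
      fix i assume "i \<in> {..<r}"
      hence "i \<le> r - 1" by auto
      have "degree (smult (D i c / fact i) ([:-c,1:]^i)) \<le> degree ([:-c,1::real:]^i)"
        by (rule degree_smult_le)
      also have "\<dots> \<le> i * degree [:-c,1::real:]" by (metis degree_power_le mult.commute)
      also have "\<dots> = i" by simp
      finally show "degree (smult (D i c / fact i) ([:-c,1:]^i)) \<le> r - 1" using \<open>i \<le> r - 1\<close> by simp
    qed simp
    define Q where "Q = P * P - [:4*lam^2:]"
    have degQ: "degree Q \<le> 2 * r - 2"
    proof -
      have "degree (P * P) \<le> degree P + degree P" by (rule degree_mult_le)
      hence "degree (P*P) \<le> 2 * r - 2" using degP by linarith
      moreover have "degree Q \<le> max (degree (P*P)) (degree [:4*lam^2:])"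
        unfolding Q_def by (rule degree_diff_le_max)
      ultimately show ?thesis by simp
    qed
    have Qv: "poly Q x = poly P x * poly P x - 4 * lam^2" for x unfolding Q_def by simp
    have appr: "\<bar>g x - poly P x\<bar> \<le> lam" if "x \<in> {c..d}" for x
    proof -
      have "\<bar>g x - poly P x\<bar> \<le> Cr * h^r"
        unfolding Pv Cr_def using taylor_bound[OF Dr r1 cI, of x h] that dI unfolding d_def by auto
      thus ?thesis using hb unfolding h_def by linarith
    qed
    have Qn: "poly Q x < 0" if "x \<in> {c..d}" "\<bar>g x\<bar> < lam" for x
    proof -
      have "\<bar>poly P x\<bar> < 2 * lam" using appr[OF that(1)] that(2) by linarith
      hence "\<bar>poly P x\<bar> * \<bar>poly P x\<bar> < (2*lam) * (2*lam)"
        by (intro mult_strict_mono) auto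
      thus ?thesis unfolding Qv by (simp add: power2_eq_square)
    qed
    have Qp: "poly Q x > 0" if "x \<in> {c..d}" "\<bar>g x\<bar> \<ge> \<theta>" for x
    proof -
      have "\<theta> - lam > 2 * lam" using mult_pos_pos[OF C0 lam0] lam0 unfolding \<theta>_def distrib_right by linarith
      hence "\<bar>poly P x\<bar> > 2 * lam" using appr[OF that(1)] that(2) by linarith
      hence "(2*lam) * (2*lam) < \<bar>poly P x\<bar> * \<bar>poly P x\<bar>"
        using lam0 by (intro mult_strict_mono) auto
      thus ?thesis unfolding Qv by (simp add: power2_eq_square)
    qed
    have cd: "{c..d} \<subseteq> I" using cI dI unfolding I_def by auto
    have "card G \<le> (2 * r - 2) + 1"
    proof (rule count_block[where g = g and Q = Q and \<theta> = \<theta> and W = W and lam = lam and sel = sel])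
      show "continuous_on {c..d} g" using continuous_on_subset[OF cg cd] .
      show "\<And>x. x \<in> {c..d} \<Longrightarrow> \<bar>g x\<bar> < lam \<Longrightarrow> poly Q x < 0" by (rule Qn)
      show "\<And>x. x \<in> {c..d} \<Longrightarrow> \<theta> \<le> \<bar>g x\<bar> \<Longrightarrow> 0 < poly Q x" by (rule Qp)
      show "degree Q \<le> 2 * r - 2" by (rule degQ)
      show "\<And>t. t \<in> {c..d} \<Longrightarrow> \<bar>g t\<bar> < \<theta> \<Longrightarrow> t \<in> W" using cd unfolding W_def by auto
      show "lam \<le> \<theta>" using th by simp
      show "G \<subseteq> components W" using G unfolding Fk_def F_def by auto
      show "finite G" by (rule G)
      fix K assume K: "K \<in> G"
      hence KF: "K \<in> F" and ik: "idx (sel K) = k" using G unfolding Fk_def by auto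
      have s: "sel K \<in> K" "sel K \<in> S0" using sel[OF KF] by auto
      hence sI: "sel K \<in> I" "\<bar>g (sel K)\<bar> < lam" unfolding S0_def by auto
      have "sel K \<in> {c..d}" using idx[OF sI(1)] ik unfolding c_def d_def by (auto simp: algebra_simps)
      thus "sel K \<in> K \<and> sel K \<in> {c..d} \<and> \<bar>g (sel K)\<bar> < lam" using s sI by auto
    qed
    thus "card G \<le> 2 * r - 1" using r1 by linarith
  qed
  have Fun: "F = (\<Union>k\<in>{..<N}. Fk k)"
  proof
    show "F \<subseteq> (\<Union>k\<in>{..<N}. Fk k)"
    proof
      fix K assume K: "K \<in> F"
      hence "sel K \<in> I" using sel unfolding S0_def by auto
      hence "idx (sel K) < N" using idx by auto
      thus "K \<in> (\<Union>k\<in>{..<N}. Fk k)" using K unfolding Fk_def by auto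
    qed
  qed (auto simp: Fk_def)
  have finF: "finite F" unfolding Fun using Fk by auto
  have "card F \<le> (\<Sum>k<N. card (Fk k))" unfolding Fun by (rule card_UN_le) simp
  also have "\<dots> \<le> N * (2 * r - 1)" using sum_bounded_above[of "{..<N}" "\<lambda>k. card (Fk k)" "2*r-1"] Fk by auto
  finally have cardF: "real (card F) \<le> real N * real (2 * r - 1)"
    by (metis of_nat_le_iff of_nat_mult)
  have "real (2*r - 1) \<le> 2 * real r" using r1 by (simp add: of_nat_diff)
  hence "real (card F) \<le> (1 + (b-a) * X) * (2 * real r)"
    using cardF NX by (meson le_trans mult_mono of_nat_0_le_iff order.trans)
  also have "\<dots> \<le> 30 * real r * (1 + (b-a) * X)"
  proof -
    have "0 \<le> (1 + (b-a) * X) * real r" using ab X0 by simp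
    moreover have "(1 + (b-a) * X) * (2 * real r) = 2 * ((1 + (b-a) * X) * real r)"
      "30 * real r * (1 + (b-a) * X) = 30 * ((1 + (b-a) * X) * real r)" by (simp_all add: mult_ac)
    ultimately show ?thesis by linarith
  qed
  also have "X = Cr powr (1 / real r) * lam powr (- 1 / real r)"
  proof -
    have "(Cr/lam) powr (1/real r) = Cr powr (1/real r) / lam powr (1/real r)"
      by (rule powr_divide)
    moreover have "lam powr (- 1 / real r) = inverse (lam powr (1/real r))"
      using powr_minus[of lam "1/real r"] by simp
    ultimately show ?thesis unfolding X_def by (simp add: divide_inverse)
  qed
  finally have cb: "real (card F) \<le> 30 * real r * (1 + (b - a) * Cr powr (1 / real r) * lam powr (- 1 / real r))"
    by (simp add: algebra_simps)
  show ?thesis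
    apply (rule exI[of _ F])
    using finF pw memb cb cov inW unfolding Cr_def S0_def W_def I_def \<theta>_def by auto
qed


end
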